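(* Let $\mathbf p=(p_1,\dots,p_n)$ be positive integers with $p_1\ge\cdots\ge p_n$, and let $0\le c'<c\le 1$. Then for every house size $h>0$ we have $S_c(h,\mathbf p)\le S_{c'}(h,\mathbf p)$ in lexicographic order. Likewise $S_c(\mathbf p)\le S_{c'}(\mathbf p)$ in lexicographic order.
   Context: Stationary divisor method with cut point $c\in[0,1]$: seats are allocated one at a time. Initially each party $i$ has $a_i=0$ seats; each next seat goes to a party $i$ maximizing $p_i/(a_i+c)$, whose $a_i$ then increases by $1$. Ties are broken in favor of the smallest index. For $c=0$ the convention is that $p_i/0>p_j/0$ whenever $p_i>p_j$, and $p_i/0>p_j/k$ for every $k>0$. $S_c(h,\mathbf p)=(s_1,\dots,s_h)$, where $s_j$ is the index of the party receiving the $j$-th seat, and $S_c(\mathbf p)$ is the corresponding infinite sequence. Lexicographic order on sequences: $s<t$ if for some $k\ge0$ we have $s_i=t_i$ for $i\le k$ and $s_{k+1}<t_{k+1}$. *)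

theory Defs
  imports Complex_Main
begin

text \<open>Parties are indexed 0,...,n-1 (n = length p); party i has vote count p!i.
  An allocation is a function a :: nat => nat (seats of each party).\<close>

definition beats :: "real \<Rightarrow> nat list \<Rightarrow> (nat \<Rightarrow> nat) \<Rightarrow> nat \<Rightarrow> nat \<Rightarrow> bool" where
  "beats c p a i j =
     (if c = 0 \<and> a i = 0 \<and> a j = 0 then p ! i > p ! j
      else if c = 0 \<and> a i = 0 then True
      else if c = 0 \<and> a j = 0 then False
      else real (p ! i) / (real (a i) + c) > real (p ! j) / (real (a j) + c))"

definition winner :: "real \<Rightarrow> nat list \<Rightarrow> (nat \<Rightarrow> nat) \<Rightarrow> nat" where
  "winner c p a = (LEAST i. i < length p \<and> (\<forall>j < length p. \<not> beats c p a j i))"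

primrec alloc :: "real \<Rightarrow> nat list \<Rightarrow> nat \<Rightarrow> (nat \<Rightarrow> nat)" where
  "alloc c p 0 = (\<lambda>_. 0)"
| "alloc c p (Suc m) = (let w = winner c p (alloc c p m) in (alloc c p m)(w := alloc c p m w + 1))"

text \<open>Infinite seat sequence S_c(p): seat_seq c p m is the party receiving the (m+1)-th seat.\<close>
definition seat_seq :: "real \<Rightarrow> nat list \<Rightarrow> nat \<Rightarrow> nat" where
  "seat_seq c p m = winner c p (alloc c p m)"

definition seats :: "real \<Rightarrow> nat \<Rightarrow> nat list \<Rightarrow> nat list" where
  "seats c h p = map (seat_seq c p) [0..<h]"

definition lex_le_list :: "nat list \<Rightarrow> nat list \<Rightarrow> bool" where
  "lex_le_list s t = (s = t \<or> (\<exists>k. k < length s \<and> k < length t \<and>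
                        (\<forall>i<k. s ! i = t ! i) \<and> s ! k < t ! k))"

definition lex_le_seq :: "(nat \<Rightarrow> nat) \<Rightarrow> (nat \<Rightarrow> nat) \<Rightarrow> bool" where
  "lex_le_seq s t = (s = t \<or> (\<exists>k. (\<forall>i<k. s i = t i) \<and> s k < t k))"

end

theory Submission
  imports Defs
begin

definition gkey :: "real \<Rightarrow> nat list \<Rightarrow> (nat \<Rightarrow> nat) \<Rightarrow> nat \<Rightarrow> real" where
  "gkey c p a i = (if c = 0 \<and> a i = 0 then sum_list (map real p) + real (p ! i)
                   else real (p ! i) / (real (a i) + c))"

lemma le_M:
  assumes "i < length p" "a \<noteq> 0"
  shows "real (p ! i) / real a \<le> sum_list (map real p)"
proof -
  have "real (p ! i) / real a \<le> real (p ! i)"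
    using assms(2) by (simp add: divide_le_eq mult_le_cancel_left1)
  also have "\<dots> \<le> sum_list (map real p)"
    using assms(1) by (intro member_le_sum_list) (auto simp add: set_conv_nth intro!: exI[of _ i])
  finally show ?thesis .
qed

lemma beats_iff:
  assumes c: "c \<ge> 0" and pos: "\<forall>x \<in> set p. x > 0" and ij: "i < length p" "j < length p"
  shows "beats c p a j i \<longleftrightarrow> gkey c p a j > gkey c p a i"
proof -
  have pj: "p ! j > 0" "p ! i > 0" using pos ij by auto
  have Mi: "a i \<noteq> 0 \<Longrightarrow> real (p ! i) / real (a i) \<le> sum_list (map real p)"
    using le_M ij by blast
  have Mj: "a j \<noteq> 0 \<Longrightarrow> real (p ! j) / real (a j) \<le> sum_list (map real p)"
    using le_M ij by blast
  show ?thesis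
    unfolding beats_def gkey_def
    using Mi Mj pj by auto
qed

lemma winner_spec:
  assumes ne: "p \<noteq> []" and c: "c \<ge> 0" and pos: "\<forall>x \<in> set p. x > 0"
  shows "winner c p a < length p \<and> (\<forall>j<length p. \<not> beats c p a j (winner c p a))"
proof -
  let ?S = "gkey c p a ` {..<length p}"
  have fin: "finite ?S" and nS: "?S \<noteq> {}" using ne by auto
  obtain i where i: "i < length p" "gkey c p a i = Max ?S"
    using Max_in[OF fin nS] by auto
  have "\<forall>j<length p. \<not> beats c p a j i"
  proof (intro allI impI)
    fix j assume j: "j < length p"
    have "gkey c p a j \<le> Max ?S" using fin j by auto
    then show "\<not> beats c p a j i" using beats_iff[OF c pos i(1) j] i by auto
  qed
  then have "\<exists>i. i < length p \<and> (\<forall>j<length p. \<not> beats c p a j i)" using i by blast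
  from LeastI_ex[OF this] show ?thesis unfolding winner_def by simp
qed

lemma beats_transfer:
  assumes c': "0 \<le> c'" "c' < c" and pos: "\<forall>x \<in> set p. x > 0"
    and w: "w < length p" "w' < length p" and le: "p ! w \<le> p ! w'"
    and b: "beats c p a w w'"
  shows "beats c' p a w w'"
proof -
  let ?x = "real (p ! w)" and ?y = "real (p ! w')" and ?A = "real (a w)" and ?B = "real (a w')"
  have px: "?x > 0" "?y > 0" using pos w by auto
  have cpos: "c > 0" using c' by auto
  have xy: "?x \<le> ?y" using le by simp
  have b1: "?x / (?A + c) > ?y / (?B + c)" using b cpos unfolding beats_def by auto
  have A0: "?A \<ge> 0" "?B \<ge> 0" by auto
  have b2: "?x * (?B + c) > ?y * (?A + c)"
    using b1 A0 cpos by (simp add: divide_simps)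
  have key: "?x * (?B + c') > ?y * (?A + c')"
  proof -
    have "?x * (?B + c') = ?x * (?B + c) - ?x * (c - c')" by (simp add: algebra_simps)
    moreover have "?x * (c - c') \<le> ?y * (c - c')" using xy c' by (intro mult_right_mono) auto
    moreover have "?y * (?A + c') = ?y * (?A + c) - ?y * (c - c')" by (simp add: algebra_simps)
    ultimately show ?thesis using b2 by linarith
  qed
  show ?thesis
  proof (cases "c' = 0")
    case True
    show ?thesis
    proof (cases "a w = 0")
      case aw: True
      show ?thesis
      proof (cases "a w' = 0")
        case True
        then show ?thesis using aw key \<open>c' = 0\<close> unfolding beats_def by simp
      next
        case False
        then show ?thesis using aw \<open>c' = 0\<close> unfolding beats_def by simp
      qed
    next
      case aw: False
      show ?thesis
      proof (cases "a w' = 0")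
        case True
        then have "?x * c > ?y * (?A + c)" using b2 by simp
        moreover have "?y * (?A + c) \<ge> ?x * (?A + c)" using xy A0 cpos by (intro mult_right_mono) auto
        moreover have "?x * (?A + c) > ?x * c" using aw px by simp
        ultimately show ?thesis by linarith
      next
        case False
        have "?A + c' > 0" "?B + c' > 0" using aw False \<open>c' = 0\<close> by auto
        then have "?x / (?A + c') > ?y / (?B + c')" using key by (simp add: divide_simps)
        then show ?thesis using aw False unfolding beats_def by auto
      qed
    qed
  next
    case False
    have "?A + c' > 0" "?B + c' > 0" using False c' by auto
    then have "?x / (?A + c') > ?y / (?B + c')" using key by (simp add: divide_simps)
    then show ?thesis using False unfolding beats_def by auto
  qed
qed

lemma winner_le:
  assumes pos: "\<forall>x \<in> set p. x > 0"
    and noninc: "\<forall>i j. i < j \<and> j < length p \<longrightarrow> p ! j \<le> p ! i"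
    and c': "0 \<le> c'" "c' < c" and ne: "p \<noteq> []"
  shows "winner c p a \<le> winner c' p a"
proof (rule ccontr)
  let ?w = "winner c p a" and ?w' = "winner c' p a"
  assume "\<not> ?w \<le> ?w'"
  then have lt: "?w' < ?w" by simp
  have cc: "c \<ge> 0" using c' by auto
  note W = winner_spec[OF ne cc pos, of a] and W' = winner_spec[OF ne c'(1) pos, of a]
  have "\<not> (?w' < length p \<and> (\<forall>j<length p. \<not> beats c p a j ?w'))"
    using not_less_Least[OF lt[unfolded winner_def]] unfolding winner_def by simp
  then obtain j where j: "j < length p" "beats c p a j ?w'" using W' by auto
  have "gkey c p a j > gkey c p a ?w'" using j beats_iff[OF cc pos] W' by blast
  moreover have "\<not> gkey c p a j > gkey c p a ?w" using W j beats_iff[OF cc pos] by blast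
  ultimately have "gkey c p a ?w > gkey c p a ?w'" by linarith
  then have "beats c p a ?w ?w'" using beats_iff[OF cc pos] W W' by blast
  moreover have "p ! ?w \<le> p ! ?w'" using noninc lt W by blast
  ultimately have "beats c' p a ?w ?w'" using beats_transfer[OF c' pos] W W' by blast
  then show False using W' W by blast
qed

lemma alloc_agree:
  assumes "\<forall>i<k. seat_seq c p i = seat_seq c' p i"
  shows "alloc c p k = alloc c' p k"
  using assms
proof (induction k)
  case 0 then show ?case by simp
next
  case (Suc k)
  then have e: "alloc c p k = alloc c' p k" by simp
  have "winner c p (alloc c p k) = winner c' p (alloc c' p k)"
    using Suc.prems unfolding seat_seq_def by simp
  then show ?case using e by (simp add: Let_def)
qed

theorem mainTheorem2:
  fixes p :: "nat list" and c c' :: real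
  assumes pos: "\<forall>x \<in> set p. x > 0"
    and noninc: "\<forall>i j. i < j \<and> j < length p \<longrightarrow> p ! j \<le> p ! i"
    and cut: "0 \<le> c'" "c' < c" "c \<le> 1"
  shows "(\<forall>h>0. lex_le_list (seats c h p) (seats c' h p))
         \<and> lex_le_seq (seat_seq c p) (seat_seq c' p)"
proof (cases "seat_seq c p = seat_seq c' p")
  case True
  then show ?thesis unfolding lex_le_list_def lex_le_seq_def seats_def by simp
next
  case False
  then have "\<exists>k. seat_seq c p k \<noteq> seat_seq c' p k" by auto
  define k where "k = (LEAST k. seat_seq c p k \<noteq> seat_seq c' p k)"
  have kd: "seat_seq c p k \<noteq> seat_seq c' p k"
    using LeastI_ex[OF \<open>\<exists>k. _\<close>] k_def by simp
  have before: "\<forall>i<k. seat_seq c p i = seat_seq c' p i"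
    using not_less_Least k_def by blast
  have ne: "p \<noteq> []"
  proof
    assume "p = []"
    then have "\<And>c a. winner c p a = (LEAST i. False)" unfolding winner_def by simp
    then show False using kd unfolding seat_seq_def by simp
  qed
  have al: "alloc c p k = alloc c' p k" using alloc_agree[OF before] .
  have "seat_seq c p k \<le> seat_seq c' p k"
    unfolding seat_seq_def al using winner_le[OF pos noninc cut(1,2) ne] by simp
  then have klt: "seat_seq c p k < seat_seq c' p k" using kd by simp
  have seq: "lex_le_seq (seat_seq c p) (seat_seq c' p)"
    unfolding lex_le_seq_def using before klt by blast
  have lst: "lex_le_list (seats c h p) (seats c' h p)" for h
  proof (cases "k < h")
    case True
    then show ?thesis unfolding lex_le_list_def seats_def
      using before klt by (intro disjI2 exI[of _ k]) auto
  next
    case False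
    then have "seats c h p = seats c' h p" unfolding seats_def using before by auto
    then show ?thesis unfolding lex_le_list_def by simp
  qed
  show ?thesis using seq lst by blast
qed

end
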